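(* Let $N\ge1$. For every $\Lambda\subseteq P_N$ and $\sigma\in S_N$, the maps $T_\Lambda$ and $R_\sigma$ are homeomorphisms of $\mathbb{D}_N$ onto itself satisfying $\pi\circ T_\Lambda=\pi$ and $\pi\circ R_\sigma=\pi$, i.e. they lie in $\mathrm{Aut}(\mathbb{D}_N)_\pi$. Furthermore, if $\mathfrak{T}_N$ and $\mathfrak{R}_N$ denote the groups generated by the $T_\Lambda$ and by the $R_\sigma$ respectively, then the set $\mathfrak{T}_N\mathfrak{R}_N$ equipped with the operation $$T_{\Lambda_1}R_{\sigma_1}\cdot T_{\Lambda_2}R_{\sigma_2}=T_{\Lambda_1\oplus\sigma_1(\Lambda_2)}R_{\sigma_1\sigma_2}\qquad(\Lambda_i\subseteq P_N,\ \sigma_i\in S_N)$$ is a group isomorphic to the outer semidirect product $\{\pm1\}^N\rtimes_\varphi S_N$ with respect to $\varphi:S_N\to\mathrm{Aut}(\{\pm1\}^N)$, $\varphi_\sigma(\varepsilon_1,\dots,\varepsilon_N)=(\varepsilon_{\sigma^{-1}(1)},\dots,\varepsilon_{\sigma^{-1}(N)})$.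
   Context: $P_N=\{1,\dots,N\}$; vectors $v\in\mathbb{C}^N$ are functions on $P_N$, $v^{-1}[S]=\{\ell:v_\ell\in S\}$; $\mathrm{Tr}(v,\Lambda):=\sum_{\ell\in\Lambda}v_\ell$; $\oplus$ is symmetric difference of sets. $\mathcal{C}:=\{z\in\mathbb{C}:\mathrm{Re}(z)>0\text{ or }z\in i\mathbb{R}_{>0}\}$. $\mathbb{D}_N:=\{(w,a,\theta)\in\mathbb{C}\times\mathbb{C}^N\times\mathbb{R}^N: a^{-1}[0]\subseteq\theta^{-1}[\mathbb{R}\smallsetminus\mathbb{Z}]\}$ (i.e. $\theta_\ell\notin\mathbb{Z}$ whenever $a_\ell=0$), with the subspace topology. $\pi:\mathbb{D}_N\to\mathbb{C}$, $\pi(w,a,\theta):=w-\mathrm{Tr}(a,a^{-1}[-\mathcal{C}])$. $\mathrm{Aut}(\mathbb{D}_N)$ is the group of homeomorphisms of $\mathbb{D}_N$ and $\mathrm{Aut}(\mathbb{D}_N)_\pi:=\{g\in\mathrm{Aut}(\mathbb{D}_N):\pi\circ g=\pi\}$. For $\Lambda\subseteq P_N$, $d(\Lambda)$ is the $N\times N$ diagonal matrix with $(\ell,\ell)$-entry $-1$ if $\ell\in\Lambda$, $1$ otherwise, and $T_\Lambda(w,a,\theta):=(w-\mathrm{Tr}(a,\Lambda),\,a\,d(\Lambda),\,\theta\,d(\Lambda))$ (row vectors). For $\sigma\in S_N$, $r(\sigma)$ is the $N\times N$ matrix whose $\ell$-th column is the $\sigma^{-1}(\ell)$-th column of the identity matrix,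 and $R_\sigma(w,a,\theta):=(w,\,a\,r(\sigma),\,\theta\,r(\sigma))$. *)

theory Defs
  imports "HOL-Analysis.Analysis" "HOL-Algebra.Bij" "HOL-Algebra.Coset" "HOL-Algebra.Generated_Groups"
begin

text \<open>Index set P_N is modelled by a finite type 'n (N = CARD('n) >= 1).
  Points of C x C^N x R^N are triples (w, a, theta).\<close>

type_synonym 'n pt = "complex \<times> (complex ^ 'n) \<times> (real ^ 'n)"

definition Cset :: "complex set" where
  "Cset = {z. Re z > 0 \<or> (Re z = 0 \<and> Im z > 0)}"

definition Tr :: "complex ^ 'n \<Rightarrow> 'n set \<Rightarrow> complex" where
  "Tr v L = (\<Sum>l\<in>L. v $ l)"

definition DD :: "('n::finite) pt set" where
  "DD = {(w, a, th). \<forall>l. a $ l = 0 \<longrightarrow> th $ l \<notin> \<int>}"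

definition piD :: "('n::finite) pt \<Rightarrow> complex" where
  "piD p = (case p of (w, a, th) \<Rightarrow> w - Tr a {l. a $ l \<in> uminus ` Cset})"

text \<open>Row vector times the diagonal matrix d(Lambda): flip signs on Lambda.\<close>
definition flipc :: "complex ^ 'n \<Rightarrow> 'n set \<Rightarrow> complex ^ 'n" where
  "flipc v L = (\<chi> l. if l \<in> L then - (v $ l) else v $ l)"
definition flipr :: "real ^ 'n \<Rightarrow> 'n set \<Rightarrow> real ^ 'n" where
  "flipr v L = (\<chi> l. if l \<in> L then - (v $ l) else v $ l)"

definition TT :: "'n set \<Rightarrow> ('n::finite) pt \<Rightarrow> 'n pt" where
  "TT L p = (case p of (w, a, th) \<Rightarrow> (w - Tr a L, flipc a L, flipr th L))"

text \<open>Row vector times r(sigma): the l-th entry becomes the sigma^{-1}(l)-th entry.\<close>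
definition RR :: "('n \<Rightarrow> 'n) \<Rightarrow> ('n::finite) pt \<Rightarrow> 'n pt" where
  "RR s p = (case p of (w, a, th) \<Rightarrow>
     (w, (\<chi> l. a $ (inv_into UNIV s l)), (\<chi> l. th $ (inv_into UNIV s l))))"

definition Aut_pi :: "(('n::finite) pt \<Rightarrow> 'n pt) \<Rightarrow> bool" where
  "Aut_pi f \<longleftrightarrow> (\<exists>g. homeomorphism DD DD f g) \<and> (\<forall>x\<in>DD. piD (f x) = piD x)"

definition TgrpN :: "(('n::finite) pt \<Rightarrow> 'n pt) set" where
  "TgrpN = generate (BijGroup DD) {restrict (TT L) DD | L. True}"
definition RgrpN :: "(('n::finite) pt \<Rightarrow> 'n pt) set" where
  "RgrpN = generate (BijGroup DD) {restrict (RR s) DD | s. s permutes UNIV}"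

definition TRgroup :: "(('n::finite) pt \<Rightarrow> 'n pt) monoid" where
  "TRgroup = \<lparr> carrier = TgrpN <#>\<^bsub>BijGroup DD\<^esub> RgrpN,
     mult = (\<lambda>f g. THE h. \<exists>L1 s1 L2 s2.
        s1 permutes UNIV \<and> s2 permutes UNIV \<and>
        f = restrict (TT L1 \<circ> RR s1) DD \<and> g = restrict (TT L2 \<circ> RR s2) DD \<and>
        h = restrict (TT (L1 \<union> s1 ` L2 - L1 \<inter> s1 ` L2) \<circ> RR (s1 \<circ> s2)) DD),
     one = restrict id DD \<rparr>"

definition signperm_sdp :: "(('n::finite \<Rightarrow> int) \<times> ('n \<Rightarrow> 'n)) monoid" where
  "signperm_sdp = \<lparr> carrier = {(e, s). (\<forall>i. e i \<in> {-1, 1}) \<and> s permutes UNIV},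
     mult = (\<lambda>(e1, s1) (e2, s2). ((\<lambda>i. e1 i * e2 (inv_into UNIV s1 i)), s1 \<circ> s2)),
     one = ((\<lambda>i. 1), id) \<rparr>"

end

theory Submission
  imports Defs
begin

lemma Tr_UNIV: "Tr a L = (\<Sum>l\<in>UNIV. if l \<in> L then a $ l else 0)"
  unfolding Tr_def by (simp add: sum.If_cases)

lemma TT_simp: "TT L (w, a, th) = (w - Tr a L, flipc a L, flipr th L)"
  by (simp add: TT_def)

lemma RR_simp: "RR s (w, a, th) = (w, (\<chi> l. a $ (inv_into UNIV s l)), (\<chi> l. th $ (inv_into UNIV s l)))"
  by (simp add: RR_def)

lemma TT_TT: "TT L (TT L p) = (p :: ('n::finite) pt)"
proof -
  obtain w a th where p: "p = (w, a, th)" by (cases p) auto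
  have "Tr (flipc a L) L = - Tr a L"
    unfolding Tr_def flipc_def by (simp add: sum_negf)
  then show ?thesis
    by (simp add: p TT_simp flipc_def flipr_def vec_eq_iff)
qed

lemma TT_comp: "TT L1 (TT L2 p) = TT (L1 \<union> L2 - L1 \<inter> L2) (p :: ('n::finite) pt)"
proof -
  obtain w a th where p: "p = (w, a, th)" by (cases p) auto
  have "Tr a L2 + Tr (flipc a L2) L1 = Tr a (L1 \<union> L2 - L1 \<inter> L2)"
    unfolding Tr_UNIV sum.distrib[symmetric] by (rule sum.cong) (auto simp: flipc_def)
  then show ?thesis
    by (simp add: p TT_simp flipc_def flipr_def vec_eq_iff algebra_simps)
qed

lemma TT_empty: "TT {} p = p"
  by (cases p) (auto simp: TT_simp Tr_def flipc_def flipr_def vec_eq_iff)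

lemma RR_id: "RR id p = p"
  by (cases p) (auto simp: RR_simp vec_eq_iff)

lemma perm_inv_simps:
  assumes "s permutes UNIV"
  shows "inv_into UNIV s (s k) = k" "s (inv_into UNIV s l) = l"
  using assms by (auto simp: permutes_inverses)

lemma RR_comp:
  assumes "s1 permutes UNIV" "s2 permutes UNIV"
  shows "RR s1 (RR s2 p) = RR (s1 \<circ> s2) p"
proof -
  have "inv_into UNIV (s1 \<circ> s2) = inv_into UNIV s2 \<circ> inv_into UNIV s1"
    using assms by (simp add: o_inv_distrib permutes_bij)
  then show ?thesis by (cases p) (simp add: RR_simp vec_eq_iff)
qed

lemma RR_TT:
  assumes "s permutes UNIV"
  shows "RR s (TT L p) = TT (s ` L) (RR s p)"
proof -
  obtain w a th where p: "p = (w, a, th)" by (cases p) auto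
  have inj: "inj s" using assms permutes_inj by blast
  have "Tr (\<chi> l. a $ (inv_into UNIV s l)) (s ` L) = Tr a L"
  proof -
    have "inj_on s L" using inj by (meson inj_on_subset subset_UNIV)
    then have "(\<Sum>l\<in>s ` L. a $ (inv_into UNIV s l)) = (\<Sum>m\<in>L. a $ (inv_into UNIV s (s m)))"
      by (simp add: sum.reindex)
    then show ?thesis unfolding Tr_def using perm_inv_simps(1)[OF assms] by simp
  qed
  moreover have "\<And>l. (inv_into UNIV s l \<in> L) = (l \<in> s ` L)"
    using perm_inv_simps[OF assms] by (metis image_iff)
  ultimately show ?thesis
    by (simp add: p TT_simp RR_simp flipc_def flipr_def vec_eq_iff)
qed

lemma neg_Cset_iff: "(a \<in> uminus ` Cset) = (- a \<in> Cset)"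
  by (metis image_iff minus_minus rev_image_eqI)

lemma Cset_cases: "a \<noteq> 0 \<Longrightarrow> (a \<in> Cset) \<noteq> (- a \<in> Cset)"
  by (auto simp: Cset_def complex_eq_iff)

lemma Cset_zero: "(0::complex) \<notin> Cset"
  by (auto simp: Cset_def)

lemma piD_TT: "piD (TT L p) = piD p"
proof -
  obtain w a th where p: "p = (w, a, th)" by (cases p) auto
  have "Tr a L + Tr (flipc a L) {l. flipc a L $ l \<in> uminus ` Cset} = Tr a {l. a $ l \<in> uminus ` Cset}"
    unfolding Tr_UNIV sum.distrib[symmetric]
  proof (rule sum.cong)
    fix l
    show "(if l \<in> L then a $ l else 0) + (if l \<in> {l. flipc a L $ l \<in> uminus ` Cset} then flipc a L $ l else 0) =
         (if l \<in> {l. a $ l \<in> uminus ` Cset} then a $ l else 0)"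
      using Cset_cases[of "a $ l"] Cset_zero
      by (cases "a $ l = 0") (auto simp: flipc_def neg_Cset_iff)
  qed simp
  then show ?thesis
    by (simp add: p TT_simp piD_def algebra_simps)
qed

lemma piD_RR:
  assumes "s permutes UNIV"
  shows "piD (RR s p) = piD p"
proof -
  obtain w a th where p: "p = (w, a, th)" by (cases p) auto
  have ip: "inv_into UNIV s permutes UNIV" using assms by (simp add: permutes_inv)
  have "Tr (\<chi> l. a $ (inv_into UNIV s l)) {l. (\<chi> l. a $ (inv_into UNIV s l)) $ l \<in> uminus ` Cset}
     = Tr a {l. a $ l \<in> uminus ` Cset}"
    unfolding Tr_UNIV
    using sum.permute[OF ip, of "\<lambda>m. if a $ m \<in> uminus ` Cset then a $ m else 0"]
    by (simp add: o_def cong: if_cong)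
  then show ?thesis by (simp add: p RR_simp piD_def)
qed

lemma TT_DD: "p \<in> DD \<Longrightarrow> TT L p \<in> DD"
  by (cases p) (auto simp: DD_def TT_simp flipc_def flipr_def split: if_splits)

lemma RR_DD: "p \<in> DD \<Longrightarrow> RR s p \<in> DD"
  by (cases p) (auto simp: DD_def RR_simp)

lemma TT_eq: "TT L = (\<lambda>p. (fst p - (\<Sum>l\<in>L. fst (snd p) $ l),
    (\<chi> l. (if l \<in> L then -1 else 1) * fst (snd p) $ l),
    (\<chi> l. (if l \<in> L then -1 else 1) * snd (snd p) $ l)))"
  by (auto simp: fun_eq_iff TT_def Tr_def flipc_def flipr_def vec_eq_iff split: prod.splits)

lemma TT_cont: "continuous_on S (TT L)"
  unfolding TT_eq by (intro continuous_intros)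

lemma RR_eq: "RR s = (\<lambda>p. (fst p, (\<chi> l. fst (snd p) $ (inv_into UNIV s l)),
    (\<chi> l. snd (snd p) $ (inv_into UNIV s l))))"
  by (auto simp: fun_eq_iff RR_def split: prod.splits)

lemma RR_cont: "continuous_on S (RR s)"
  unfolding RR_eq by (intro continuous_intros)

lemma Aut_TT: "Aut_pi (TT L)"
  unfolding Aut_pi_def
proof (intro conjI exI ballI)
  show "homeomorphism DD DD (TT L) (TT L)"
  proof -
    have "TT L ` DD = DD"
    proof
      show "TT L ` DD \<subseteq> DD" using TT_DD by blast
      show "DD \<subseteq> TT L ` DD" using TT_DD TT_TT by (metis image_eqI subsetI)
    qed
    then show ?thesis unfolding homeomorphism_def using TT_TT TT_cont by auto
  qed
qed (simp add: piD_TT)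

lemma Aut_RR:
  assumes "s permutes UNIV"
  shows "Aut_pi (RR s)"
  unfolding Aut_pi_def
proof (intro conjI exI ballI)
  have ip: "inv_into UNIV s permutes UNIV" using assms by (simp add: permutes_inv)
  have c1: "RR s (RR (inv_into UNIV s) p) = p" for p
    using RR_comp[OF assms ip] permutes_inv_o(1)[OF assms] RR_id by metis
  have c2: "RR (inv_into UNIV s) (RR s p) = p" for p
    using RR_comp[OF ip assms] permutes_inv_o(2)[OF assms] RR_id by metis
  have i1: "RR s ` DD = DD"
  proof
    show "RR s ` DD \<subseteq> DD" using RR_DD by blast
    show "DD \<subseteq> RR s ` DD" using RR_DD c1 by (metis image_eqI subsetI)
  qed
  have i2: "RR (inv_into UNIV s) ` DD = DD"
  proof
    show "RR (inv_into UNIV s) ` DD \<subseteq> DD" using RR_DD by blast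
    show "DD \<subseteq> RR (inv_into UNIV s) ` DD" using RR_DD c2 by (metis image_eqI subsetI)
  qed
  show "homeomorphism DD DD (RR s) (RR (inv_into UNIV s))"
    unfolding homeomorphism_def using c1 c2 i1 i2 RR_cont by auto
qed (simp add: piD_RR[OF assms])

lemma half_not_int: "(1/2::real) \<notin> \<int>"
proof
  assume "(1/2::real) \<in> \<int>"
  then obtain n where "1/2 = real_of_int n" by (auto elim: Ints_cases)
  then have "real_of_int 1 = real_of_int (2*n)" by simp
  then have "(1::int) = 2*n" using of_int_eq_iff by blast
  then show False by presburger
qed

lemma TTRR_a: "fst (snd (TT L (RR s (w, a, th)))) $ l = (if l \<in> L then - a $ (inv_into UNIV s l) else a $ (inv_into UNIV s l))"
  by (simp add: TT_simp RR_simp flipc_def)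

lemma rep_unique:
  fixes L1 L2 :: "'n::finite set"
  assumes s1: "s1 permutes UNIV" and s2: "s2 permutes UNIV"
    and eq: "restrict (TT L1 \<circ> RR s1) DD = restrict (TT L2 \<circ> RR s2) DD"
  shows "L1 = L2 \<and> s1 = s2"
proof -
  have key: "s1 k = s2 k \<and> (s1 k \<in> L1 \<longleftrightarrow> s1 k \<in> L2)" for k
  proof -
    define p :: "'n pt" where "p = (0, \<chi> l. if l = k then 1 else 0, \<chi> l. 1/2)"
    have "p \<in> DD" by (simp add: DD_def p_def half_not_int)
    then have "TT L1 (RR s1 p) = TT L2 (RR s2 p)" using eq by (metis comp_apply restrict_apply')
    then have e: "fst (snd (TT L1 (RR s1 p))) $ (s1 k) = fst (snd (TT L2 (RR s2 p))) $ (s1 k)" by simp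
    have comp: "fst (snd (TT L (RR s p))) $ l = (if l \<in> L then -1 else 1) * (if inv_into UNIV s l = k then 1 else 0)" for L s l
      unfolding p_def TTRR_a by simp
    have i1: "inv_into UNIV s1 (s1 k) = k" using perm_inv_simps(1)[OF s1] .
    have e2: "(if s1 k \<in> L1 then -1 else 1) = ((if s1 k \<in> L2 then -1 else 1) * (if inv_into UNIV s2 (s1 k) = k then 1 else 0) :: complex)"
      using e unfolding comp i1 by simp
    have i2: "inv_into UNIV s2 (s1 k) = k"
    proof (rule ccontr)
      assume "inv_into UNIV s2 (s1 k) \<noteq> k"
      then have "(if s1 k \<in> L1 then -1 else 1) = (0::complex)" using e2 by simp
      then show False by (cases "s1 k \<in> L1") auto
    qed
    then have "s1 k = s2 k" using perm_inv_simps(2)[OF s2, of "s1 k"] by simp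
    moreover have "(if s1 k \<in> L1 then -1 else 1) = (if s1 k \<in> L2 then -1 else (1::complex))"
      using e2 i2 by simp
    then have "(s1 k \<in> L1 \<longleftrightarrow> s1 k \<in> L2)"
      by (cases "s1 k \<in> L1"; cases "s1 k \<in> L2") auto
    ultimately show ?thesis by simp
  qed
  have "l \<in> L1 \<longleftrightarrow> l \<in> L2" for l
    using key[of "inv_into UNIV s1 l"] perm_inv_simps(2)[OF s1, of l] by simp
  then have "L1 = L2" by blast
  moreover have "s1 = s2" using key by blast
  ultimately show ?thesis by simp
qed

lemma Bij_restrictI:
  assumes "\<forall>p\<in>DD. f p \<in> DD" "\<forall>p\<in>DD. g p \<in> DD" "\<forall>p\<in>DD. g (f p) = p" "\<forall>p\<in>DD. f (g p) = p"
  shows "restrict f DD \<in> Bij DD"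
  unfolding Bij_def using assms
  by (auto intro!: bij_betw_byWitness[where f'=g])

lemma compose_restrict:
  "(\<forall>p\<in>DD. g p \<in> DD) \<Longrightarrow> compose DD (restrict f DD) (restrict g DD) = restrict (f \<circ> g) DD"
  by (auto simp: compose_def fun_eq_iff)

lemma Bij_mult: "x \<in> Bij S \<Longrightarrow> y \<in> Bij S \<Longrightarrow> x \<otimes>\<^bsub>BijGroup S\<^esub> y = compose S x y"
  by (simp add: BijGroup_def)

lemma Bij_one: "\<one>\<^bsub>BijGroup S\<^esub> = (\<lambda>x\<in>S. x)"
  by (simp add: BijGroup_def)

lemma TT_Bij: "restrict (TT L) DD \<in> Bij DD"
  by (rule Bij_restrictI[where g="TT L"]) (auto simp: TT_DD TT_TT)

lemma RR_Bij: assumes "s permutes UNIV" shows "restrict (RR s) DD \<in> Bij DD"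
proof -
  have ip: "inv_into UNIV s permutes UNIV" using assms by (simp add: permutes_inv)
  have c1: "RR s (RR (inv_into UNIV s) p) = p" for p
    using RR_comp[OF assms ip] permutes_inv_o(1)[OF assms] RR_id by metis
  have c2: "RR (inv_into UNIV s) (RR s p) = p" for p
    using RR_comp[OF ip assms] permutes_inv_o(2)[OF assms] RR_id by metis
  show ?thesis
    by (rule Bij_restrictI[where g="RR (inv_into UNIV s)"]) (auto simp: RR_DD c1 c2)
qed

lemma restrict_id_DD: "restrict id DD = (\<lambda>x\<in>DD. x)"
  by (simp add: fun_eq_iff)

lemma ST_sub: "subgroup {restrict (TT L) DD | L. True} (BijGroup (DD :: ('n::finite) pt set))"
proof (rule subgroup.intro)
  interpret G: group "BijGroup (DD :: 'n pt set)" by (rule group_BijGroup)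
  show "{restrict (TT L) DD | L. True} \<subseteq> carrier (BijGroup (DD :: 'n pt set))"
    using TT_Bij by (auto simp: BijGroup_def)
  have mc: "restrict (TT L1) DD \<otimes>\<^bsub>BijGroup DD\<^esub> restrict (TT L2) DD = restrict (TT (L1 \<union> L2 - L1 \<inter> L2)) (DD :: 'n pt set)" for L1 L2
    by (simp add: Bij_mult TT_Bij compose_restrict TT_DD o_def TT_comp)
  show "x \<otimes>\<^bsub>BijGroup DD\<^esub> y \<in> {restrict (TT L) DD | L. True}"
    if "x \<in> {restrict (TT L) DD | L. True}" "y \<in> {restrict (TT L) DD | L. True}" for x y :: "'n pt \<Rightarrow> 'n pt"
  proof -
    from that(1) obtain L1 where x: "x = restrict (TT L1) DD" by blast
    from that(2) obtain L2 where y: "y = restrict (TT L2) DD" by blast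
    show ?thesis unfolding x y mc by blast
  qed
  have one: "\<one>\<^bsub>BijGroup DD\<^esub> = restrict (TT {}) (DD :: 'n pt set)"
    by (simp add: Bij_one TT_empty fun_eq_iff)
  then show "\<one>\<^bsub>BijGroup DD\<^esub> \<in> {restrict (TT L) (DD :: 'n pt set) | L. True}" by auto
  show "inv\<^bsub>BijGroup DD\<^esub> x \<in> {restrict (TT L) DD | L. True}"
    if "x \<in> {restrict (TT L) (DD :: 'n pt set) | L. True}" for x
  proof -
    from that obtain L :: "'n set" where x: "x = restrict (TT L) DD" by blast
    have "x \<otimes>\<^bsub>BijGroup DD\<^esub> x = \<one>\<^bsub>BijGroup DD\<^esub>" unfolding x mc one by simp
    moreover have xc: "x \<in> carrier (BijGroup DD)" unfolding x using TT_Bij by (simp add: BijGroup_def)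
    ultimately have "inv\<^bsub>BijGroup DD\<^esub> x = x"
      using G.inv_equality by blast
    then show ?thesis using that by simp
  qed
qed

lemma SR_sub: "subgroup {restrict (RR s) DD | s. s permutes UNIV} (BijGroup (DD :: ('n::finite) pt set))"
proof (rule subgroup.intro)
  interpret G: group "BijGroup (DD :: 'n pt set)" by (rule group_BijGroup)
  show "{restrict (RR s) DD | s. s permutes UNIV} \<subseteq> carrier (BijGroup (DD :: 'n pt set))"
    using RR_Bij by (auto simp: BijGroup_def)
  have mc: "restrict (RR s1) DD \<otimes>\<^bsub>BijGroup DD\<^esub> restrict (RR s2) DD = restrict (RR (s1 \<circ> s2)) (DD :: 'n pt set)"
    if "s1 permutes UNIV" "s2 permutes UNIV" for s1 s2
    using that by (simp add: Bij_mult RR_Bij compose_restrict RR_DD o_def RR_comp)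
  show "x \<otimes>\<^bsub>BijGroup DD\<^esub> y \<in> {restrict (RR s) DD | s. s permutes UNIV}"
    if "x \<in> {restrict (RR s) DD | s. s permutes UNIV}" "y \<in> {restrict (RR s) DD | s. s permutes UNIV}" for x y :: "'n pt \<Rightarrow> 'n pt"
  proof -
    from that(1) obtain s1 where x: "x = restrict (RR s1) DD" and s1: "s1 permutes UNIV" by blast
    from that(2) obtain s2 where y: "y = restrict (RR s2) DD" and s2: "s2 permutes UNIV" by blast
    have "s1 \<circ> s2 permutes UNIV" by (rule permutes_compose[OF s2 s1])
    then show ?thesis unfolding x y mc[OF s1 s2] by blast
  qed
  have one: "\<one>\<^bsub>BijGroup DD\<^esub> = restrict (RR id) (DD :: 'n pt set)"
    by (simp add: Bij_one RR_id fun_eq_iff)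
  then show "\<one>\<^bsub>BijGroup DD\<^esub> \<in> {restrict (RR s) (DD :: 'n pt set) | s. s permutes UNIV}"
    using permutes_id[of UNIV] by auto
  show "inv\<^bsub>BijGroup DD\<^esub> x \<in> {restrict (RR s) DD | s. s permutes UNIV}"
    if "x \<in> {restrict (RR s) (DD :: 'n pt set) | s. s permutes UNIV}" for x
  proof -
    from that obtain s where x: "x = restrict (RR s) DD" and s: "s permutes UNIV" by blast
    have ip: "inv_into UNIV s permutes UNIV" using s by (simp add: permutes_inv)
    have "restrict (RR (inv_into UNIV s)) DD \<otimes>\<^bsub>BijGroup DD\<^esub> x = \<one>\<^bsub>BijGroup DD\<^esub>"
      unfolding x mc[OF ip s] one permutes_inv_o(2)[OF s] by simp
    moreover have "x \<in> carrier (BijGroup DD)" unfolding x using RR_Bij[OF s] by (simp add: BijGroup_def)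
    moreover have "restrict (RR (inv_into UNIV s)) DD \<in> carrier (BijGroup DD)" using RR_Bij[OF ip] by (simp add: BijGroup_def)
    ultimately have "inv\<^bsub>BijGroup DD\<^esub> x = restrict (RR (inv_into UNIV s)) DD"
      using G.inv_equality by blast
    then show ?thesis using ip by auto
  qed
qed

lemma TgrpN_eq: "TgrpN = {restrict (TT L) DD | L. True}"
proof
  show "TgrpN \<subseteq> {restrict (TT L) DD | L. True}"
    unfolding TgrpN_def by (rule group.generate_subgroup_incl[OF group_BijGroup _ ST_sub]) simp
  show "{restrict (TT L) DD | L. True} \<subseteq> TgrpN"
    unfolding TgrpN_def by (auto intro: generate.incl)
qed

lemma RgrpN_eq: "RgrpN = {restrict (RR s) DD | s. s permutes UNIV}"
proof
  show "RgrpN \<subseteq> {restrict (RR s) DD | s. s permutes UNIV}"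
    unfolding RgrpN_def by (rule group.generate_subgroup_incl[OF group_BijGroup _ SR_sub]) simp
  show "{restrict (RR s) DD | s. s permutes UNIV} \<subseteq> RgrpN"
    unfolding RgrpN_def by (auto intro: generate.incl)
qed

lemma TR_prod: "s permutes UNIV \<Longrightarrow> restrict (TT L) DD \<otimes>\<^bsub>BijGroup DD\<^esub> restrict (RR s) DD = restrict (TT L \<circ> RR s) DD"
  by (simp add: Bij_mult TT_Bij RR_Bij compose_restrict RR_DD)

lemma carrier_TR: "carrier TRgroup = {restrict (TT L \<circ> RR s) DD | L s. s permutes UNIV}"
proof -
  have "TgrpN <#>\<^bsub>BijGroup DD\<^esub> RgrpN = {restrict (TT L \<circ> RR s) DD | L s. s permutes UNIV}"
  proof
    show "TgrpN <#>\<^bsub>BijGroup DD\<^esub> RgrpN \<subseteq> {restrict (TT L \<circ> RR s) DD | L s. s permutes UNIV}"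
    proof
      fix x assume "x \<in> TgrpN <#>\<^bsub>BijGroup DD\<^esub> RgrpN"
      then obtain L s where s: "s permutes UNIV" and x: "x = restrict (TT L) DD \<otimes>\<^bsub>BijGroup DD\<^esub> restrict (RR s) DD"
        unfolding set_mult_def TgrpN_eq RgrpN_eq by blast
      show "x \<in> {restrict (TT L \<circ> RR s) DD | L s. s permutes UNIV}"
        unfolding x TR_prod[OF s] using s by blast
    qed
    show "{restrict (TT L \<circ> RR s) DD | L s. s permutes UNIV} \<subseteq> TgrpN <#>\<^bsub>BijGroup DD\<^esub> RgrpN"
    proof
      fix x assume "x \<in> {restrict (TT L \<circ> RR s) DD | L s. s permutes UNIV}"
      then obtain L s where x: "x = restrict (TT L \<circ> RR s) DD" and s: "s permutes UNIV" by auto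
      have "restrict (TT L) DD \<in> TgrpN" "restrict (RR s) DD \<in> RgrpN"
        unfolding TgrpN_eq RgrpN_eq using s by auto
      then show "x \<in> TgrpN <#>\<^bsub>BijGroup DD\<^esub> RgrpN"
        unfolding set_mult_def x TR_prod[OF s, symmetric] by blast
    qed
  qed
  then show ?thesis by (simp add: TRgroup_def)
qed


definition sgnset :: "('n \<Rightarrow> int) \<Rightarrow> 'n set" where
  "sgnset e = {i. e i = -1}"

definition reprTR :: "('n::finite \<Rightarrow> int) \<times> ('n \<Rightarrow> 'n) \<Rightarrow> 'n pt \<Rightarrow> 'n pt" where
  "reprTR x = restrict (TT (sgnset (fst x)) \<circ> RR (snd x)) DD"

lemma sdp_carrier: "x \<in> carrier signperm_sdp \<longleftrightarrow> (\<forall>i. fst x i \<in> {-1,1}) \<and> snd x permutes UNIV"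
  by (cases x) (simp add: signperm_sdp_def)

lemma sdp_mult: "(e1, s1) \<otimes>\<^bsub>signperm_sdp\<^esub> (e2, s2) = ((\<lambda>i. e1 i * e2 (inv_into UNIV s1 i)), s1 \<circ> s2)"
  by (simp add: signperm_sdp_def)

lemma sdp_one: "\<one>\<^bsub>signperm_sdp\<^esub> = ((\<lambda>i. 1), id)"
  by (simp add: signperm_sdp_def)

lemma pm1_mult: "(a::int) \<in> {-1,1} \<Longrightarrow> b \<in> {-1,1} \<Longrightarrow> a * b \<in> {-1,1}"
  by auto

lemma group_sdp: "group (signperm_sdp :: (('n::finite \<Rightarrow> int) \<times> ('n \<Rightarrow> 'n)) monoid)"
proof (rule groupI)
  fix x y :: "('n \<Rightarrow> int) \<times> ('n \<Rightarrow> 'n)"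
  assume x: "x \<in> carrier signperm_sdp" and y: "y \<in> carrier signperm_sdp"
  obtain e1 s1 where x': "x = (e1, s1)" by (cases x)
  obtain e2 s2 where y': "y = (e2, s2)" by (cases y)
  have e1: "\<forall>i. e1 i \<in> {-1,1}" and s1: "s1 permutes UNIV" using x unfolding x' sdp_carrier by auto
  have e2: "\<forall>i. e2 i \<in> {-1,1}" and s2: "s2 permutes UNIV" using y unfolding y' sdp_carrier by auto
  show "x \<otimes>\<^bsub>signperm_sdp\<^esub> y \<in> carrier signperm_sdp"
    unfolding x' y' sdp_mult sdp_carrier using e1 e2 permutes_compose[OF s2 s1] pm1_mult by simp
next
  show "\<one>\<^bsub>signperm_sdp\<^esub> \<in> carrier (signperm_sdp :: (('n::finite \<Rightarrow> int) \<times> ('n \<Rightarrow> 'n)) monoid)"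
    unfolding sdp_one sdp_carrier by (simp add: permutes_id)
next
  fix x y z :: "('n \<Rightarrow> int) \<times> ('n \<Rightarrow> 'n)"
  assume x: "x \<in> carrier signperm_sdp" and y: "y \<in> carrier signperm_sdp" and z: "z \<in> carrier signperm_sdp"
  obtain e1 s1 where x': "x = (e1, s1)" by (cases x)
  obtain e2 s2 where y': "y = (e2, s2)" by (cases y)
  obtain e3 s3 where z': "z = (e3, s3)" by (cases z)
  have s1: "s1 permutes UNIV" using x unfolding x' sdp_carrier by auto
  have s2: "s2 permutes UNIV" using y unfolding y' sdp_carrier by auto
  have "inv_into UNIV (s1 \<circ> s2) = inv_into UNIV s2 \<circ> inv_into UNIV s1"
    using s1 s2 by (simp add: o_inv_distrib permutes_bij)
  then show "x \<otimes>\<^bsub>signperm_sdp\<^esub> y \<otimes>\<^bsub>signperm_sdp\<^esub> z = x \<otimes>\<^bsub>signperm_sdp\<^esub> (y \<otimes>\<^bsub>signperm_sdp\<^esub> z)"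
    unfolding x' y' z' sdp_mult by (simp add: mult.assoc o_assoc)
next
  fix x :: "('n \<Rightarrow> int) \<times> ('n \<Rightarrow> 'n)"
  assume x: "x \<in> carrier signperm_sdp"
  obtain e s where x': "x = (e, s)" by (cases x)
  show "\<one>\<^bsub>signperm_sdp\<^esub> \<otimes>\<^bsub>signperm_sdp\<^esub> x = x"
    unfolding x' sdp_one sdp_mult by simp
next
  fix x :: "('n \<Rightarrow> int) \<times> ('n \<Rightarrow> 'n)"
  assume x: "x \<in> carrier signperm_sdp"
  obtain e s where x': "x = (e, s)" by (cases x)
  have e: "\<forall>i. e i \<in> {-1,1}" and s: "s permutes UNIV" using x unfolding x' sdp_carrier by auto
  have ip: "inv_into UNIV s permutes UNIV" using s by (simp add: permutes_inv)
  have ii: "inv_into UNIV (inv_into UNIV s) = s" using s by (simp add: inv_inv_eq permutes_bij)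
  have sq: "e (s i) * e (s i) = 1" for i using e[rule_format, of "s i"] by auto
  have "((\<lambda>i. e (s i)), inv_into UNIV s) \<otimes>\<^bsub>signperm_sdp\<^esub> x = \<one>\<^bsub>signperm_sdp\<^esub>"
    unfolding x' sdp_mult sdp_one ii permutes_inv_o(2)[OF s] using sq by simp
  moreover have "((\<lambda>i. e (s i)), inv_into UNIV s) \<in> carrier signperm_sdp"
    unfolding sdp_carrier using e ip by simp
  ultimately show "\<exists>y\<in>carrier signperm_sdp. y \<otimes>\<^bsub>signperm_sdp\<^esub> x = \<one>\<^bsub>signperm_sdp\<^esub>" by blast
qed

lemma sgnset_mult:
  assumes e1: "\<forall>i. e1 i \<in> {-1,1}" and e2: "\<forall>i. e2 i \<in> {-1,1}" and s1: "s1 permutes UNIV"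
  shows "sgnset (\<lambda>i. e1 i * e2 (inv_into UNIV s1 i)) = sgnset e1 \<union> s1 ` sgnset e2 - sgnset e1 \<inter> s1 ` sgnset e2"
proof -
  have imA: "i \<in> s1 ` A \<longleftrightarrow> inv_into UNIV s1 i \<in> A" for i A
  proof
    assume "i \<in> s1 ` A"
    then obtain a where "a \<in> A" "i = s1 a" by blast
    then show "inv_into UNIV s1 i \<in> A" using perm_inv_simps(1)[OF s1] by simp
  next
    assume "inv_into UNIV s1 i \<in> A"
    then show "i \<in> s1 ` A" using image_eqI[of i s1 "inv_into UNIV s1 i" A] perm_inv_simps(2)[OF s1, of i] by simp
  qed
  have im: "i \<in> s1 ` sgnset e2 \<longleftrightarrow> e2 (inv_into UNIV s1 i) = -1" for i
    unfolding imA by (simp add: sgnset_def)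
  have pw: "e1 i * e2 (inv_into UNIV s1 i) = -1 \<longleftrightarrow> (e1 i = -1) \<noteq> (e2 (inv_into UNIV s1 i) = -1)" for i
    using e1[rule_format, of i] e2[rule_format, of "inv_into UNIV s1 i"] by auto
  show ?thesis
  proof (rule Set.set_eqI)
    fix i
    have A: "i \<in> sgnset (\<lambda>i. e1 i * e2 (inv_into UNIV s1 i)) \<longleftrightarrow> e1 i * e2 (inv_into UNIV s1 i) = -1"
      by (simp add: sgnset_def)
    have B: "i \<in> sgnset e1 \<longleftrightarrow> e1 i = -1" by (simp add: sgnset_def)
    show "i \<in> sgnset (\<lambda>i. e1 i * e2 (inv_into UNIV s1 i)) \<longleftrightarrow> i \<in> sgnset e1 \<union> s1 ` sgnset e2 - sgnset e1 \<inter> s1 ` sgnset e2"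
      using A B im[of i] pw[of i] by blast
  qed
qed

lemma carrier_TR': "carrier (TRgroup :: ('n::finite pt \<Rightarrow> 'n pt) monoid) = reprTR ` carrier signperm_sdp"
  (is "?A = ?B")
proof
  show "?A \<subseteq> ?B"
  proof
    fix f assume "f \<in> carrier (TRgroup :: ('n pt \<Rightarrow> 'n pt) monoid)"
    then obtain L s where f: "f = restrict (TT L \<circ> RR s) DD" and s: "s permutes UNIV"
      unfolding carrier_TR by blast
    define e :: "'n \<Rightarrow> int" where "e = (\<lambda>i. if i \<in> L then -1 else 1)"
    have "sgnset e = L" unfolding e_def sgnset_def by auto
    then have "f = reprTR (e, s)" unfolding f reprTR_def by simp
    moreover have "(e, s) \<in> carrier signperm_sdp" unfolding sdp_carrier e_def using s by simp
    ultimately show "f \<in> reprTR ` carrier signperm_sdp" by blast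
  qed
  show "?B \<subseteq> ?A"
  proof
    fix f assume "f \<in> reprTR ` carrier (signperm_sdp :: (('n::finite \<Rightarrow> int) \<times> ('n \<Rightarrow> 'n)) monoid)"
    then obtain x where x: "x \<in> carrier (signperm_sdp :: (('n::finite \<Rightarrow> int) \<times> ('n \<Rightarrow> 'n)) monoid)" and f: "f = reprTR x" by blast
    have "snd x permutes UNIV" using x unfolding sdp_carrier by blast
    then show "f \<in> carrier TRgroup" unfolding carrier_TR f reprTR_def by blast
  qed
qed

lemma pm1_eq: "\<forall>i. (e1::'n \<Rightarrow> int) i \<in> {-1,1} \<Longrightarrow> \<forall>i. e2 i \<in> {-1,1} \<Longrightarrow> sgnset e1 = sgnset e2 \<Longrightarrow> e1 = e2"
proof
  fix i assume a: "\<forall>i. e1 i \<in> {-1,1}" "\<forall>i. e2 i \<in> {-1,1}" "sgnset e1 = sgnset e2"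
  then have "(e1 i = -1) = (e2 i = -1)" unfolding sgnset_def by blast
  then show "e1 i = e2 i" using a(1)[rule_format, of i] a(2)[rule_format, of i] by auto
qed

lemma reprTR_inj: "inj_on (reprTR :: ('n::finite \<Rightarrow> int) \<times> ('n \<Rightarrow> 'n) \<Rightarrow> _) (carrier signperm_sdp)"
proof (rule inj_onI)
  fix x y :: "('n \<Rightarrow> int) \<times> ('n \<Rightarrow> 'n)"
  assume x: "x \<in> carrier signperm_sdp" and y: "y \<in> carrier signperm_sdp" and eq: "reprTR x = reprTR y"
  obtain e1 s1 where x': "x = (e1, s1)" by (cases x)
  obtain e2 s2 where y': "y = (e2, s2)" by (cases y)
  have e1: "\<forall>i. e1 i \<in> {-1,1}" and s1: "s1 permutes UNIV" using x unfolding x' sdp_carrier by auto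
  have e2: "\<forall>i. e2 i \<in> {-1,1}" and s2: "s2 permutes UNIV" using y unfolding y' sdp_carrier by auto
  have "sgnset e1 = sgnset e2 \<and> s1 = s2"
    by (rule rep_unique[OF s1 s2]) (use eq in \<open>simp add: x' y' reprTR_def\<close>)
  then show "x = y" unfolding x' y' using pm1_eq[OF e1 e2] by simp
qed

lemma TR_mult: "f \<otimes>\<^bsub>TRgroup\<^esub> g = (THE h. \<exists>L1 s1 L2 s2.
        s1 permutes UNIV \<and> s2 permutes UNIV \<and>
        f = restrict (TT L1 \<circ> RR s1) DD \<and> g = restrict (TT L2 \<circ> RR s2) DD \<and>
        h = restrict (TT (L1 \<union> s1 ` L2 - L1 \<inter> s1 ` L2) \<circ> RR (s1 \<circ> s2)) DD)"
  by (simp add: TRgroup_def)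

lemma reprTR_mult:
  assumes x: "x \<in> carrier signperm_sdp" and y: "y \<in> carrier signperm_sdp"
  shows "reprTR (x \<otimes>\<^bsub>signperm_sdp\<^esub> y) = reprTR x \<otimes>\<^bsub>TRgroup\<^esub> reprTR (y :: ('n::finite \<Rightarrow> int) \<times> ('n \<Rightarrow> 'n))"
proof -
  obtain e1 s1 where x': "x = (e1, s1)" by (cases x)
  obtain e2 s2 where y': "y = (e2, s2)" by (cases y)
  have e1: "\<forall>i. e1 i \<in> {-1,1}" and s1: "s1 permutes UNIV" using x unfolding x' sdp_carrier by auto
  have e2: "\<forall>i. e2 i \<in> {-1,1}" and s2: "s2 permutes UNIV" using y unfolding y' sdp_carrier by auto
  define h0 where "h0 = reprTR (x \<otimes>\<^bsub>signperm_sdp\<^esub> y)"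
  have h0: "h0 = restrict (TT (sgnset e1 \<union> s1 ` sgnset e2 - sgnset e1 \<inter> s1 ` sgnset e2) \<circ> RR (s1 \<circ> s2)) DD"
    unfolding h0_def x' y' sdp_mult reprTR_def using sgnset_mult[OF e1 e2 s1] by simp
  have rx: "reprTR x = restrict (TT (sgnset e1) \<circ> RR s1) DD" unfolding x' reprTR_def by simp
  have ry: "reprTR y = restrict (TT (sgnset e2) \<circ> RR s2) DD" unfolding y' reprTR_def by simp
  have "(THE h. \<exists>L1 s1' L2 s2'.
        s1' permutes UNIV \<and> s2' permutes UNIV \<and>
        reprTR x = restrict (TT L1 \<circ> RR s1') DD \<and> reprTR y = restrict (TT L2 \<circ> RR s2') DD \<and>
        h = restrict (TT (L1 \<union> s1' ` L2 - L1 \<inter> s1' ` L2) \<circ> RR (s1' \<circ> s2')) DD) = h0"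
  proof (rule the_equality)
    show "\<exists>L1 s1' L2 s2'.
        s1' permutes UNIV \<and> s2' permutes UNIV \<and>
        reprTR x = restrict (TT L1 \<circ> RR s1') DD \<and> reprTR y = restrict (TT L2 \<circ> RR s2') DD \<and>
        h0 = restrict (TT (L1 \<union> s1' ` L2 - L1 \<inter> s1' ` L2) \<circ> RR (s1' \<circ> s2')) DD"
      using s1 s2 rx ry h0 by blast
  next
    fix h assume "\<exists>L1 s1' L2 s2'.
        s1' permutes UNIV \<and> s2' permutes UNIV \<and>
        reprTR x = restrict (TT L1 \<circ> RR s1') DD \<and> reprTR y = restrict (TT L2 \<circ> RR s2') DD \<and>
        h = restrict (TT (L1 \<union> s1' ` L2 - L1 \<inter> s1' ` L2) \<circ> RR (s1' \<circ> s2')) DD"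
    then obtain L1 s1' L2 s2' where a: "s1' permutes UNIV" "s2' permutes UNIV"
      "reprTR x = restrict (TT L1 \<circ> RR s1') DD" "reprTR y = restrict (TT L2 \<circ> RR s2') DD"
      "h = restrict (TT (L1 \<union> s1' ` L2 - L1 \<inter> s1' ` L2) \<circ> RR (s1' \<circ> s2')) DD" by blast
    have "sgnset e1 = L1 \<and> s1 = s1'" using rep_unique[OF s1 a(1)] a(3) rx by simp
    moreover have "sgnset e2 = L2 \<and> s2 = s2'" using rep_unique[OF s2 a(2)] a(4) ry by simp
    ultimately show "h = h0" using a(5) h0 by simp
  qed
  then show ?thesis unfolding TR_mult h0_def by simp
qed

lemma reprTR_one: "reprTR \<one>\<^bsub>signperm_sdp\<^esub> = (\<one>\<^bsub>TRgroup\<^esub> :: 'n::finite pt \<Rightarrow> 'n pt)"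
proof -
  have "sgnset (\<lambda>i::'n. 1::int) = {}" unfolding sgnset_def by simp
  then show ?thesis unfolding sdp_one reprTR_def
    by (simp add: TRgroup_def fun_eq_iff TT_empty RR_id)
qed

lemma monoid_transfer:
  assumes G: "group G" and bij: "bij_betw h (carrier G) (carrier H)"
    and hm: "\<And>x y. x \<in> carrier G \<Longrightarrow> y \<in> carrier G \<Longrightarrow> h (x \<otimes>\<^bsub>G\<^esub> y) = h x \<otimes>\<^bsub>H\<^esub> h y"
    and h1: "h \<one>\<^bsub>G\<^esub> = \<one>\<^bsub>H\<^esub>"
  shows "monoid H"
proof -
  interpret G: group G by (rule G)
  have surj: "h ` carrier G = carrier H" using bij by (simp add: bij_betw_def)
  have pre: "\<And>x. x \<in> carrier H \<Longrightarrow> \<exists>a\<in>carrier G. x = h a" using surj by blast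
  have img: "\<And>a. a \<in> carrier G \<Longrightarrow> h a \<in> carrier H" using surj by blast
  show ?thesis
  proof (rule monoidI)
    fix x y assume "x \<in> carrier H" "y \<in> carrier H"
    then obtain a b where ab: "a \<in> carrier G" "b \<in> carrier G" "x = h a" "y = h b" using pre by metis
    then have "x \<otimes>\<^bsub>H\<^esub> y = h (a \<otimes>\<^bsub>G\<^esub> b)" using hm by simp
    then show "x \<otimes>\<^bsub>H\<^esub> y \<in> carrier H" using img ab G.m_closed by simp
  next
    show "\<one>\<^bsub>H\<^esub> \<in> carrier H" using img[OF G.one_closed] h1 by simp
  next
    fix x y z assume "x \<in> carrier H" "y \<in> carrier H" "z \<in> carrier H"
    then obtain a b c where abc: "a \<in> carrier G" "b \<in> carrier G" "c \<in> carrier G" "x = h a" "y = h b" "z = h c"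
      using pre by metis
    have "x \<otimes>\<^bsub>H\<^esub> y \<otimes>\<^bsub>H\<^esub> z = h (a \<otimes>\<^bsub>G\<^esub> b \<otimes>\<^bsub>G\<^esub> c)"
      using abc hm G.m_closed by simp
    also have "\<dots> = h (a \<otimes>\<^bsub>G\<^esub> (b \<otimes>\<^bsub>G\<^esub> c))" using abc G.m_assoc by simp
    also have "\<dots> = x \<otimes>\<^bsub>H\<^esub> (y \<otimes>\<^bsub>H\<^esub> z)" using abc hm G.m_closed by simp
    finally show "x \<otimes>\<^bsub>H\<^esub> y \<otimes>\<^bsub>H\<^esub> z = x \<otimes>\<^bsub>H\<^esub> (y \<otimes>\<^bsub>H\<^esub> z)" .
  next
    fix x assume "x \<in> carrier H"
    then obtain a where a: "a \<in> carrier G" "x = h a" using pre by metis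
    have "\<one>\<^bsub>H\<^esub> \<otimes>\<^bsub>H\<^esub> x = h (\<one>\<^bsub>G\<^esub> \<otimes>\<^bsub>G\<^esub> a)" using a hm[OF G.one_closed a(1)] h1 by simp
    then show "\<one>\<^bsub>H\<^esub> \<otimes>\<^bsub>H\<^esub> x = x" using a by simp
    have "x \<otimes>\<^bsub>H\<^esub> \<one>\<^bsub>H\<^esub> = h (a \<otimes>\<^bsub>G\<^esub> \<one>\<^bsub>G\<^esub>)" using a hm[OF a(1) G.one_closed] h1 by simp
    then show "x \<otimes>\<^bsub>H\<^esub> \<one>\<^bsub>H\<^esub> = x" using a by simp
  qed
qed

lemma reprTR_bij: "bij_betw (reprTR :: ('n::finite \<Rightarrow> int) \<times> ('n \<Rightarrow> 'n) \<Rightarrow> _) (carrier signperm_sdp) (carrier TRgroup)"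
  unfolding bij_betw_def using reprTR_inj carrier_TR' by metis

lemma reprTR_iso: "reprTR \<in> iso (signperm_sdp :: (('n::finite \<Rightarrow> int) \<times> ('n \<Rightarrow> 'n)) monoid) TRgroup"
proof (rule isoI)
  show "reprTR \<in> hom (signperm_sdp :: (('n::finite \<Rightarrow> int) \<times> ('n \<Rightarrow> 'n)) monoid) TRgroup"
  proof (rule homI)
    fix x :: "('n \<Rightarrow> int) \<times> ('n \<Rightarrow> 'n)"
    assume "x \<in> carrier signperm_sdp"
    then show "reprTR x \<in> carrier TRgroup" using carrier_TR' by (metis imageI)
  next
    fix x y :: "('n \<Rightarrow> int) \<times> ('n \<Rightarrow> 'n)"
    assume "x \<in> carrier signperm_sdp" "y \<in> carrier signperm_sdp"
    then show "reprTR (x \<otimes>\<^bsub>signperm_sdp\<^esub> y) = reprTR x \<otimes>\<^bsub>TRgroup\<^esub> reprTR y" by (rule reprTR_mult)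
  qed
  show "bij_betw reprTR (carrier (signperm_sdp :: (('n::finite \<Rightarrow> int) \<times> ('n \<Rightarrow> 'n)) monoid)) (carrier TRgroup)"
    by (rule reprTR_bij)
qed

theorem proposition1:
  shows "(\<forall>(L::'n::finite set). Aut_pi (TT L)) \<and>
         (\<forall>s::'n \<Rightarrow> 'n. s permutes UNIV \<longrightarrow> Aut_pi (RR s)) \<and>
         group (TRgroup :: ('n pt \<Rightarrow> 'n pt) monoid) \<and>
         (TRgroup :: ('n pt \<Rightarrow> 'n pt) monoid) \<cong> (signperm_sdp :: (('n \<Rightarrow> int) \<times> ('n \<Rightarrow> 'n)) monoid)"
proof (intro conjI allI impI)
  show "Aut_pi (TT L)" for L :: "'n set" by (rule Aut_TT)
  show "Aut_pi (RR s)" if "s permutes UNIV" for s :: "'n \<Rightarrow> 'n" using that by (rule Aut_RR)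
  have iso: "(signperm_sdp :: (('n \<Rightarrow> int) \<times> ('n \<Rightarrow> 'n)) monoid) \<cong> (TRgroup :: ('n pt \<Rightarrow> 'n pt) monoid)"
    using reprTR_iso by (rule is_isoI)
  have mon: "monoid (TRgroup :: ('n pt \<Rightarrow> 'n pt) monoid)"
    by (rule monoid_transfer[OF group_sdp reprTR_bij reprTR_mult reprTR_one])
  show "group (TRgroup :: ('n pt \<Rightarrow> 'n pt) monoid)"
    by (rule group.iso_imp_group[OF group_sdp iso mon])
  show "(TRgroup :: ('n pt \<Rightarrow> 'n pt) monoid) \<cong> (signperm_sdp :: (('n \<Rightarrow> int) \<times> ('n \<Rightarrow> 'n)) monoid)"
    by (rule group.iso_sym[OF group_sdp iso])
qed

end
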